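(* Let $\hat T$ be a virtual tree with $n$ vertices (each vertex $v$ having current children $C(v)$, $|C(v)|\le 2$, and appended children $A(v)$, $|A(v)|\le 2$) stored in an energy-bound light-first order. Then local messaging in $\hat T$ — where in a local broadcast each vertex (1) sends its message to its current children and (2) unless it is the root, waits until it receives the message from its parent and propagates it to its appended children, and local reduce is defined analogously with reduction — takes $O(n)$ total energy and $O(\log n)$ depth.
   Context: Processors sit on the cells of a 2D grid enumerated by a space-filling curve $K$; sending a message costs energy equal to the Manhattan distance between sender and receiver; depth is the number of parallel communication rounds. Each vertex is stored in one processor at position $p_v$. For a rooted tree, $s(v)$ is the size of the subtree rooted at $v$; the tree is in ($K$-)light-first order if for every vertex $v$ its children can be indexed $u_1,\dots,u_m$ with $s(u_1)\le\dots\le s(u_m)$ so that $u_i$ is at position $p_v+1+\sum_{j<i}s(u_j)$. A light-first order is energy-bound if, for every rooted tree with degree bounded by a constant and $n$ vertices stored in it, the total energy of every vertex sending one message to each of its children is $O(n)$. A virtual tree is a rooted tree in which the children of each vertex $v$ are split into an ordered list $C(v)$ of current children followed by an ordered list $A(v)$ of appended children (as produced from an arbitrary-degree tree by recursively regrouping children: $C(v)=(c_1,\dots,c_d)$ becomes $(c_1,c_{\lfloor d/2\rfloor+1})$ with $A(c_1)=(c_2,\dots,c_{\lfloor d/2\rfloor})$, $A(c_{\lfloor d/2\rfloor+1})=(c_{\lfloor d/2\rfloor+2},\dots,c_d)$, and likewise for $A(v)$). Local broadcast: each vertex's message is delivered to all its children. Local reduce: each vertex receives the reduction, under an associative operation,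 of messages from its children. *)

theory Defs
  imports Complex_Main
begin

text \<open>Processors sit on the cells of the (quarter-infinite) 2D grid nat x nat; the
  space-filling curve K enumerates the cells: processor/position i is the cell K i.
  Energy of a message = Manhattan distance between sender and receiver cell.\<close>

definition manhattan :: "nat \<times> nat \<Rightarrow> nat \<times> nat \<Rightarrow> nat" where
  "manhattan a b = nat \<bar>int (fst a) - int (fst b)\<bar> + nat \<bar>int (snd a) - int (snd b)\<bar>"

definition tree_edges :: "(nat \<Rightarrow> nat list) \<Rightarrow> (nat \<times> nat) set" where
  "tree_edges ch = {(v, u). u \<in> set (ch v)}"

definition rooted_tree :: "nat set \<Rightarrow> nat \<Rightarrow> (nat \<Rightarrow> nat list) \<Rightarrow> bool" where
  "rooted_tree V r ch \<longleftrightarrow>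
     finite V \<and> r \<in> V \<and>
     (\<forall>v. distinct (ch v) \<and> set (ch v) \<subseteq> V) \<and>
     (\<forall>v. v \<notin> V \<longrightarrow> ch v = []) \<and>
     (\<forall>v. r \<notin> set (ch v)) \<and>
     (\<forall>u\<in>V - {r}. \<exists>!v. u \<in> set (ch v)) \<and>
     (\<forall>u\<in>V. (r, u) \<in> (tree_edges ch)\<^sup>*)"

definition subtree_size :: "(nat \<Rightarrow> nat list) \<Rightarrow> nat \<Rightarrow> nat" where
  "subtree_size ch v = card {w. (v, w) \<in> (tree_edges ch)\<^sup>*}"

definition light_first :: "nat set \<Rightarrow> (nat \<Rightarrow> nat list) \<Rightarrow> (nat \<Rightarrow> nat) \<Rightarrow> bool" where
  "light_first V ch p \<longleftrightarrow>
     (\<forall>v\<in>V. \<exists>us. distinct us \<and> set us = set (ch v) \<and>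
        sorted (map (subtree_size ch) us) \<and>
        (\<forall>i<length us. p (us ! i) = p v + 1 + (\<Sum>j<i. subtree_size ch (us ! j))))"

definition tree_energy :: "(nat \<Rightarrow> nat \<times> nat) \<Rightarrow> nat set \<Rightarrow> (nat \<Rightarrow> nat list) \<Rightarrow> (nat \<Rightarrow> nat) \<Rightarrow> nat" where
  "tree_energy K V ch p = (\<Sum>v\<in>V. \<Sum>u\<in>set (ch v). manhattan (K (p v)) (K (p u)))"

definition energy_bound :: "(nat \<Rightarrow> nat \<times> nat) \<Rightarrow> bool" where
  "energy_bound K \<longleftrightarrow>
     (\<forall>D::nat. \<exists>c::real. \<forall>V r ch p.
        rooted_tree V r ch \<and> (\<forall>v. length (ch v) \<le> D) \<and> light_first V ch p \<longrightarrow>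
        real (tree_energy K V ch p) \<le> c * real (card V))"

text \<open>Recursive regrouping of an ordered sibling list (c_1..c_d): if d \<le> 2 it is kept;
  otherwise only (c_1, c_{floor(d/2)+1}) is kept, (c_2..c_{floor(d/2)}) becomes the appended
  list of c_1 and (c_{floor(d/2)+2}..c_d) the appended list of c_{floor(d/2)+1}, and these
  appended lists are regrouped likewise.  kept L is the kept part; appended L x is the
  (regrouped) appended-children list that x obtains from the regrouping of L.\<close>

definition kept :: "'a list \<Rightarrow> 'a list" where
  "kept L = (if length L \<le> 2 then L else [L ! 0, L ! (length L div 2)])"

function appended :: "'a list \<Rightarrow> 'a \<Rightarrow> 'a list" where
  "appended L x =
     (if length L \<le> 2 then []
      else (let h = length L div 2; L1 = take (h - 1) (drop 1 L); L2 = drop (h + 1) L in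
            if x = L ! 0 then kept L1
            else if x = L ! h then kept L2
            else appended L1 x @ appended L2 x))"
  by pat_completeness auto
termination
  by (relation "measure (length \<circ> fst)") auto

declare appended.simps [simp del]

definition tparent :: "(nat \<Rightarrow> nat list) \<Rightarrow> nat \<Rightarrow> nat" where
  "tparent ch u = (THE v. u \<in> set (ch v))"

definition vcur :: "(nat \<Rightarrow> nat list) \<Rightarrow> nat \<Rightarrow> nat list" where
  "vcur ch v = kept (ch v)"

definition vapp :: "(nat \<Rightarrow> nat list) \<Rightarrow> nat \<Rightarrow> nat list" where
  "vapp ch v = (if \<exists>u. v \<in> set (ch u) then appended (ch (tparent ch v)) v else [])"

definition vchildren :: "(nat \<Rightarrow> nat list) \<Rightarrow> nat \<Rightarrow> nat list" where
  "vchildren ch v = vcur ch v @ vapp ch v"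

text \<open>Messages are triples (round, sender, receiver).\<close>

inductive bcast_msg :: "(nat \<Rightarrow> nat list) \<Rightarrow> (nat \<Rightarrow> nat list) \<Rightarrow> nat \<Rightarrow> nat \<Rightarrow> nat \<Rightarrow> bool"
  for C A :: "nat \<Rightarrow> nat list" where
  cur: "u \<in> set (C v) \<Longrightarrow> bcast_msg C A 1 v u"
| app: "bcast_msg C A t w v \<Longrightarrow> u \<in> set (A v) \<Longrightarrow> bcast_msg C A (Suc t) v u"

definition bcast_msgs :: "(nat \<Rightarrow> nat list) \<Rightarrow> (nat \<Rightarrow> nat list) \<Rightarrow> (nat \<times> nat \<times> nat) set" where
  "bcast_msgs C A = {(t, v, u). bcast_msg C A t v u}"

text \<open>Local reduce: a vertex u waits until it has received the (partial) reductions from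
  all its appended children, combines them with its own message and sends the result to
  its parent.  Hence u sends in round 1 + (height of u in the forest of appended edges).\<close>

inductive apath :: "(nat \<Rightarrow> nat list) \<Rightarrow> nat \<Rightarrow> nat \<Rightarrow> nat \<Rightarrow> bool" for A where
  refl: "apath A u 0 u"
| step: "apath A u k w \<Longrightarrow> w' \<in> set (A w) \<Longrightarrow> apath A u (Suc k) w'"

definition aheight :: "(nat \<Rightarrow> nat list) \<Rightarrow> nat \<Rightarrow> nat" where
  "aheight A u = Sup {k. \<exists>w. apath A u k w}"

definition reduce_msgs :: "(nat \<Rightarrow> nat list) \<Rightarrow> (nat \<Rightarrow> nat list) \<Rightarrow> (nat \<times> nat \<times> nat) set" where
  "reduce_msgs C A = {(Suc (aheight A u), u, v) | u v. u \<in> set (C v) \<or> u \<in> set (A v)}"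

definition msg_energy :: "(nat \<Rightarrow> nat \<times> nat) \<Rightarrow> (nat \<Rightarrow> nat) \<Rightarrow> (nat \<times> nat \<times> nat) set \<Rightarrow> nat" where
  "msg_energy K p M = (\<Sum>(t, v, u)\<in>M. manhattan (K (p v)) (K (p u)))"

definition msg_depth :: "(nat \<times> nat \<times> nat) set \<Rightarrow> nat" where
  "msg_depth M = Sup (fst ` M)"

end

theory Submission
  imports Defs
begin


function cap :: "'a list \<Rightarrow> 'a \<Rightarrow> nat" where
  "cap L x =
     (if length L \<le> 2 then length L
      else (let h = length L div 2; L1 = take (h - 1) (drop 1 L); L2 = drop (h + 1) L in
            if x = L ! 0 \<or> x = L ! h then length L
            else if x \<in> set L1 then cap L1 x else cap L2 x))"
  by pat_completeness auto
termination
  by (relation "measure (length \<circ> fst)") auto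

declare cap.simps [simp del]

lemma decomp:
  assumes "2 < length L"
  shows "L = L ! 0 # take (length L div 2 - 1) (drop 1 L) @ L ! (length L div 2) # drop (length L div 2 + 1) L"
proof -
  let ?h = "length L div 2"
  have h: "?h < length L" "1 \<le> ?h" using assms by auto
  have "L = take ?h L @ L ! ?h # drop (Suc ?h) L" using h id_take_nth_drop by blast
  moreover have "take ?h L = L ! 0 # take (?h - 1) (drop 1 L)"
    using h by (cases L; cases ?h) auto
  ultimately show ?thesis by simp
qed

lemma split_facts:
  assumes "2 < length L"
  defines "h \<equiv> length L div 2"
  defines "L1 \<equiv> take (h - 1) (drop 1 L)" and "L2 \<equiv> drop (h + 1) L"
  shows "L = L ! 0 # L1 @ L ! h # L2" "length L1 < length L" "length L2 < length L"
    "2 * length L1 + 1 \<le> length L" "2 * length L2 + 1 \<le> length L"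
    "kept L = [L ! 0, L ! h]"
    "appended L x = (if x = L ! 0 then kept L1 else if x = L ! h then kept L2
            else appended L1 x @ appended L2 x)"
    "cap L x = (if x = L ! 0 \<or> x = L ! h then length L
            else if x \<in> set L1 then cap L1 x else cap L2 x)"
    "set L1 \<subseteq> set L" "set L2 \<subseteq> set L" "L ! 0 \<in> set L" "L ! h \<in> set L"
    "set L = insert (L ! 0) (insert (L ! h) (set L1 \<union> set L2))"
proof -
  show *: "L = L ! 0 # L1 @ L ! h # L2" using decomp[OF assms(1)] unfolding L1_def L2_def h_def .
  show "set L1 \<subseteq> set L" "set L2 \<subseteq> set L" "L ! 0 \<in> set L" "L ! h \<in> set L"
    "set L = insert (L ! 0) (insert (L ! h) (set L1 \<union> set L2))"
    using arg_cong[OF *, of set] by auto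
  show "length L1 < length L" "length L2 < length L"
    "2 * length L1 + 1 \<le> length L" "2 * length L2 + 1 \<le> length L"
    using assms unfolding L1_def L2_def h_def by auto
  show "kept L = [L ! 0, L ! h]" using assms unfolding kept_def h_def by auto
  show "appended L x = (if x = L ! 0 then kept L1 else if x = L ! h then kept L2
            else appended L1 x @ appended L2 x)"
    using assms unfolding L1_def L2_def h_def by (subst appended.simps) (simp add: Let_def)
  show "cap L x = (if x = L ! 0 \<or> x = L ! h then length L
            else if x \<in> set L1 then cap L1 x else cap L2 x)"
    using assms unfolding L1_def L2_def h_def by (subst cap.simps) (simp add: Let_def)
qed

lemma kept_small: "length L \<le> 2 \<Longrightarrow> kept L = L"
  by (simp add: kept_def)
lemma app_small: "length L \<le> 2 \<Longrightarrow> appended L x = []"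
  by (subst appended.simps) simp
lemma cap_small: "length L \<le> 2 \<Longrightarrow> cap L x = length L"
  by (subst cap.simps) simp

lemma kept_set: "set (kept L) \<subseteq> set L"
  by (cases "length L \<le> 2") (auto simp: kept_def intro!: nth_mem)

lemma kept_len: "length (kept L) \<le> 2"
  by (simp add: kept_def)

lemma kept_distinct: assumes d: "distinct L" shows "distinct (kept L)"
proof (cases "length L \<le> 2")
  case False
  have i: "0 < length L" "length L div 2 < length L" "(0::nat) \<noteq> length L div 2" using False by auto
  have "L ! 0 \<noteq> L ! (length L div 2)"
    using d i by (simp add: nth_eq_iff_index_eq)
  then show ?thesis using d False by (simp add: kept_def)
qed (simp add: kept_def d)

lemma app_set: "set (appended L x) \<subseteq> set L"
proof (induction L rule: length_induct)
  case (1 L)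
  show ?case
  proof (cases "length L \<le> 2")
    case True then show ?thesis by (simp add: app_small)
  next
    case False
    then have g: "2 < length L" by simp
    note S = split_facts[OF g]
    have "set (kept (take (length L div 2 - 1) (drop 1 L))) \<subseteq> set L"
      using kept_set S(9) by (rule order_trans)
    moreover have "set (kept (drop (length L div 2 + 1) L)) \<subseteq> set L"
      using kept_set S(10) by (rule order_trans)
    moreover have "set (appended (take (length L div 2 - 1) (drop 1 L)) x) \<subseteq> set L"
      using 1[rule_format, OF S(2)] S(9) by (rule order_trans)
    moreover have "set (appended (drop (length L div 2 + 1) L) x) \<subseteq> set L"
      using 1[rule_format, OF S(3)] S(10) by (rule order_trans)
    ultimately show ?thesis unfolding S(7) by simp
  qed
qed

lemma app_notin: "x \<notin> set L \<Longrightarrow> appended L x = []"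
proof (induction L rule: length_induct)
  case (1 L)
  show ?case
  proof (cases "length L \<le> 2")
    case True then show ?thesis by (simp add: app_small)
  next
    case False
    then have g: "2 < length L" by simp
    note S = split_facts[OF g]
    have "x \<noteq> L ! 0" "x \<noteq> L ! (length L div 2)" using 1(2) S(11,12) by auto
    moreover have "x \<notin> set (take (length L div 2 - 1) (drop 1 L))"
       "x \<notin> set (drop (length L div 2 + 1) L)" using 1(2) S(9,10) by blast+
    ultimately show ?thesis unfolding S(7) using 1(1)[rule_format, OF S(2)] 1(1)[rule_format, OF S(3)] by simp
  qed
qed


lemma split_distinct:
  assumes g: "2 < length L" and d: "distinct L"
  defines "h \<equiv> length L div 2"
  defines "L1 \<equiv> take (h - 1) (drop 1 L)" and "L2 \<equiv> drop (h + 1) L"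
  shows "distinct L1" "distinct L2" "L ! 0 \<noteq> L ! h" "L ! 0 \<notin> set L1" "L ! 0 \<notin> set L2"
    "L ! h \<notin> set L1" "L ! h \<notin> set L2" "set L1 \<inter> set L2 = {}"
proof -
  have e: "L = L ! 0 # L1 @ L ! h # L2" using split_facts(1)[OF g] unfolding h_def L1_def L2_def .
  have "distinct (L ! 0 # L1 @ L ! h # L2)" using d by (subst (asm) e)
  then show "distinct L1" "distinct L2" "L ! 0 \<noteq> L ! h" "L ! 0 \<notin> set L1" "L ! 0 \<notin> set L2"
    "L ! h \<notin> set L1" "L ! h \<notin> set L2" "set L1 \<inter> set L2 = {}" by auto
qed

lemma app_cases:
  assumes g: "2 < length L" and d: "distinct L"
  defines "h \<equiv> length L div 2"
  defines "L1 \<equiv> take (h - 1) (drop 1 L)" and "L2 \<equiv> drop (h + 1) L"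
  shows "appended L x = (if x = L ! 0 then kept L1 else if x = L ! h then kept L2
     else if x \<in> set L1 then appended L1 x else if x \<in> set L2 then appended L2 x else [])"
    "cap L x = (if x = L ! 0 \<or> x = L ! h then length L
            else if x \<in> set L1 then cap L1 x else cap L2 x)"
proof -
  note S = split_facts[OF g] and D = split_distinct[OF g d]
  show "appended L x = (if x = L ! 0 then kept L1 else if x = L ! h then kept L2
     else if x \<in> set L1 then appended L1 x else if x \<in> set L2 then appended L2 x else [])"
    unfolding S(7) h_def L1_def L2_def using D(8) app_notin[of x] by auto
  show "cap L x = (if x = L ! 0 \<or> x = L ! h then length L
            else if x \<in> set L1 then cap L1 x else cap L2 x)"
    unfolding S(8) h_def L1_def L2_def ..
qed

lemma app_distinct_len:
  "distinct L \<Longrightarrow> distinct (appended L x) \<and> length (appended L x) \<le> 2"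
proof (induction L rule: length_induct)
  case (1 L)
  show ?case
  proof (cases "length L \<le> 2")
    case True then show ?thesis by (simp add: app_small)
  next
    case False
    then have g: "2 < length L" by simp
    note S = split_facts[OF g] and D = split_distinct[OF g 1(2)] and A = app_cases[OF g 1(2)]
    show ?thesis unfolding A(1)
      using 1(1)[rule_format, OF S(2) D(1)] 1(1)[rule_format, OF S(3) D(2)]
        kept_distinct[OF D(1)] kept_distinct[OF D(2)] kept_len
      by auto
  qed
qed

lemma aux_if: "set k1 \<subseteq> P \<Longrightarrow> set k2 \<subseteq> Q \<Longrightarrow> set a1 \<subseteq> P \<Longrightarrow> set a2 \<subseteq> Q \<Longrightarrow>
  set (if c1 then k1 else if c2 then k2 else if c3 then a1 else if c4 then a2 else []) \<subseteq> P \<union> Q"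
  by auto

lemma kept_app_disj:
  assumes d: "distinct L" and y: "y \<in> set (kept L)"
  shows "y \<notin> set (appended L x)"
proof (cases "length L \<le> 2")
  case True then show ?thesis by (simp add: app_small)
next
  case False
  then have g: "2 < length L" by simp
  note S = split_facts[OF g] and D = split_distinct[OF g d] and A = app_cases[OF g d]
  have 1: "set (appended L x) \<subseteq> set (take (length L div 2 - 1) (drop 1 L)) \<union> set (drop (length L div 2 + 1) L)"
    using kept_set[of "take (length L div 2 - 1) (drop 1 L)"] kept_set[of "drop (length L div 2 + 1) L"]
      app_set[of "take (length L div 2 - 1) (drop 1 L)" x] app_set[of "drop (length L div 2 + 1) L" x]
    apply (subst A(1)[of x])
    apply (rule aux_if)
    apply assumption+
    done
  show ?thesis using 1 y S(6) D by auto
qed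

lemma app_unique:
  "distinct L \<Longrightarrow> \<forall>x1 x2. y \<in> set (appended L x1) \<longrightarrow> y \<in> set (appended L x2) \<longrightarrow> x1 = x2"
proof (induction L rule: length_induct)
  case (1 L)
  show ?case
  proof (cases "length L \<le> 2")
    case True then show ?thesis by (simp add: app_small)
  next
    case False
    then have g: "2 < length L" by simp
    note S = split_facts[OF g] and D = split_distinct[OF g 1(2)] and A = app_cases[OF g 1(2)]
    let ?L1 = "take (length L div 2 - 1) (drop 1 L)" and ?L2 = "drop (length L div 2 + 1) L"
    note IH1 = 1(1)[rule_format, OF S(2) D(1)] and IH2 = 1(1)[rule_format, OF S(3) D(2)]
    show ?thesis
    proof (intro allI impI)
      fix x1 x2 assume y1: "y \<in> set (appended L x1)" and y2: "y \<in> set (appended L x2)"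
      have loc: "(x = L ! 0 \<and> y \<in> set (kept ?L1)) \<or> (x = L ! (length L div 2) \<and> y \<in> set (kept ?L2))
         \<or> (x \<in> set ?L1 \<and> y \<in> set (appended ?L1 x)) \<or> (x \<in> set ?L2 \<and> y \<in> set (appended ?L2 x))"
        if "y \<in> set (appended L x)" for x
        using that unfolding A(1) by (auto split: if_splits)
      have k1: "set (kept ?L1) \<subseteq> set ?L1" and k2: "set (kept ?L2) \<subseteq> set ?L2" by (rule kept_set)+
      have a1: "set (appended ?L1 x) \<subseteq> set ?L1" and a2: "set (appended ?L2 x) \<subseteq> set ?L2" for x
        by (rule app_set)+
      have kd1: "y \<in> set (kept ?L1) \<Longrightarrow> y \<notin> set (appended ?L1 x)" for x
        using kept_app_disj[OF D(1)] by blast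
      have kd2: "y \<in> set (kept ?L2) \<Longrightarrow> y \<notin> set (appended ?L2 x)" for x
        using kept_app_disj[OF D(2)] by blast
      show "x1 = x2"
        using loc[OF y1] loc[OF y2] k1 k2 a1[of x1] a1[of x2] a2[of x1] a2[of x2] kd1 kd2 D(8) IH1 IH2
        by blast
    qed
  qed
qed

lemma app_reach:
  "distinct L \<Longrightarrow> x \<in> set L \<Longrightarrow> \<exists>z\<in>set (kept L). (z, x) \<in> {(a, b). b \<in> set (appended L a)}\<^sup>*"
proof (induction L arbitrary: x rule: length_induct)
  case (1 L)
  show ?case
  proof (cases "length L \<le> 2")
    case True then show ?thesis using 1(3) by (simp add: kept_small) blast
  next
    case False
    then have g: "2 < length L" by simp
    note S = split_facts[OF g] and D = split_distinct[OF g 1(2)] and A = app_cases[OF g 1(2)]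
    let ?h = "length L div 2"
    let ?L1 = "take (?h - 1) (drop 1 L)" and ?L2 = "drop (?h + 1) L"
    let ?R = "{(a, b). b \<in> set (appended L a)}"
    have sub1: "{(a, b). b \<in> set (appended ?L1 a)} \<subseteq> ?R"
    proof clarify
      fix a b assume "b \<in> set (appended ?L1 a)"
      moreover then have "a \<in> set ?L1" using app_notin by fastforce
      ultimately show "b \<in> set (appended L a)" using A(1)[of a] D by auto
    qed
    have sub2: "{(a, b). b \<in> set (appended ?L2 a)} \<subseteq> ?R"
    proof clarify
      fix a b assume "b \<in> set (appended ?L2 a)"
      moreover then have "a \<in> set ?L2" using app_notin by fastforce
      ultimately show "b \<in> set (appended L a)" using A(1)[of a] D by auto
    qed
    have x: "x = L ! 0 \<or> x = L ! ?h \<or> x \<in> set ?L1 \<or> x \<in> set ?L2" using 1(3) S(13) by auto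
    then show ?thesis
    proof (elim disjE)
      assume "x = L ! 0" then show ?thesis using S(6) by auto
    next
      assume "x = L ! ?h" then show ?thesis using S(6) by auto
    next
      assume "x \<in> set ?L1"
      then obtain z where z: "z \<in> set (kept ?L1)" "(z, x) \<in> {(a, b). b \<in> set (appended ?L1 a)}\<^sup>*"
        using 1(1)[rule_format, OF S(2) D(1)] by blast
      have "(z, x) \<in> ?R\<^sup>*" using rtrancl_mono[OF sub1] z(2) by blast
      moreover have "(L ! 0, z) \<in> ?R" using z(1) A(1)[of "L ! 0"] by simp
      ultimately have "(L ! 0, x) \<in> ?R\<^sup>*" by (rule converse_rtrancl_into_rtrancl[rotated])
      then show ?thesis using S(6) by auto
    next
      assume "x \<in> set ?L2"
      then obtain z where z: "z \<in> set (kept ?L2)" "(z, x) \<in> {(a, b). b \<in> set (appended ?L2 a)}\<^sup>*"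
        using 1(1)[rule_format, OF S(3) D(2)] by blast
      have "(z, x) \<in> ?R\<^sup>*" using rtrancl_mono[OF sub2] z(2) by blast
      moreover have "(L ! ?h, z) \<in> ?R" using z(1) A(1)[of "L ! ?h"] D(3) by simp
      ultimately have "(L ! ?h, x) \<in> ?R\<^sup>*" by (rule converse_rtrancl_into_rtrancl[rotated])
      then show ?thesis using S(6) by auto
    qed
  qed
qed

lemma cap_le: "cap L x \<le> length L"
proof (induction L rule: length_induct)
  case (1 L)
  show ?case
  proof (cases "length L \<le> 2")
    case True then show ?thesis by (simp add: cap_small)
  next
    case False
    then have g: "2 < length L" by simp
    note S = split_facts[OF g]
    have "cap (take (length L div 2 - 1) (drop 1 L)) x \<le> length L"
      using 1[rule_format, OF S(2)] S(2) by linarith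
    moreover have "cap (drop (length L div 2 + 1) L) x \<le> length L"
      using 1[rule_format, OF S(3)] S(3) by linarith
    ultimately show ?thesis unfolding S(8) by simp
  qed
qed

lemma cap_kept: "y \<in> set (kept L) \<Longrightarrow> cap L y = length L"
  by (cases "length L \<le> 2") (auto simp: cap_small kept_def cap.simps[of L y])

lemma cap_dec:
  "distinct L \<Longrightarrow> y \<in> set (appended L x) \<Longrightarrow> 2 * cap L y + 1 \<le> cap L x"
proof (induction L arbitrary: x rule: length_induct)
  case (1 L)
  show ?case
  proof (cases "length L \<le> 2")
    case True then show ?thesis using 1(3) by (simp add: app_small)
  next
    case False
    then have g: "2 < length L" by simp
    note S = split_facts[OF g] and D = split_distinct[OF g 1(2)]
    note A = app_cases[OF g 1(2)]
    let ?h = "length L div 2"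
    let ?L1 = "take (?h - 1) (drop 1 L)" and ?L2 = "drop (?h + 1) L"
    have k1: "set (kept ?L1) \<subseteq> set ?L1" and k2: "set (kept ?L2) \<subseteq> set ?L2" by (rule kept_set)+
    have a1: "set (appended ?L1 x) \<subseteq> set ?L1" and a2: "set (appended ?L2 x) \<subseteq> set ?L2"
      by (rule app_set)+
    consider "x = L ! 0" | "x = L ! ?h" | "x \<noteq> L ! 0" "x \<noteq> L ! ?h" "x \<in> set ?L1"
      | "x \<noteq> L ! 0" "x \<noteq> L ! ?h" "x \<notin> set ?L1" "x \<in> set ?L2"
      | "x \<noteq> L ! 0" "x \<noteq> L ! ?h" "x \<notin> set ?L1" "x \<notin> set ?L2" by blast
    then show ?thesis
    proof cases
      case 1
      then have y: "y \<in> set (kept ?L1)" using A(1)[of x] \<open>y \<in> set (appended L x)\<close> by simp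
      then have "cap L y = cap ?L1 y" using A(2)[of y] k1 D by auto
      also have "\<dots> = length ?L1" using cap_kept[OF y] .
      finally show ?thesis using A(2)[of x] 1 S(4) by simp
    next
      case 2
      then have y: "y \<in> set (kept ?L2)" using A(1)[of x] D(3) \<open>y \<in> set (appended L x)\<close> by simp
      then have "cap L y = cap ?L2 y" using A(2)[of y] k2 D by auto
      also have "\<dots> = length ?L2" using cap_kept[OF y] .
      finally show ?thesis using A(2)[of x] 2 S(5) by simp
    next
      case 3
      then have y: "y \<in> set (appended ?L1 x)" using A(1)[of x] \<open>y \<in> set (appended L x)\<close> by simp
      then have "cap L y = cap ?L1 y" using A(2)[of y] app_set[of ?L1 x] D by auto
      moreover have "cap L x = cap ?L1 x" using A(2)[of x] 3 by simp
      ultimately show ?thesis using "1.IH"[rule_format, OF S(2)] D(1) y by simp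
    next
      case 4
      then have y: "y \<in> set (appended ?L2 x)" using A(1)[of x] \<open>y \<in> set (appended L x)\<close> by simp
      then have "cap L y = cap ?L2 y" using A(2)[of y] app_set[of ?L2 x] D by auto
      moreover have "cap L x = cap ?L2 x" using A(2)[of x] 4 by simp
      ultimately show ?thesis using "1.IH"[rule_format, OF S(3)] D(2) y by simp
    next
      case 5
      then show ?thesis using A(1)[of x] \<open>y \<in> set (appended L x)\<close> by simp
    qed
  qed
qed



context
  fixes V r ch
  assumes rt: "rooted_tree V r ch"
begin

lemma rt_basic:
  shows "finite V" "r \<in> V" "distinct (ch v)" "set (ch v) \<subseteq> V" "v \<notin> V \<Longrightarrow> ch v = []"
    "r \<notin> set (ch v)" "u \<in> V \<Longrightarrow> (r, u) \<in> (tree_edges ch)\<^sup>*"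
    "u \<in> V - {r} \<Longrightarrow> \<exists>!v. u \<in> set (ch v)"
proof -
  note R = rt[unfolded rooted_tree_def]
  show "finite V" using R by blast
  show "r \<in> V" using R by blast
  show "distinct (ch v)" using R by blast
  show "set (ch v) \<subseteq> V" using R by blast
  show "v \<notin> V \<Longrightarrow> ch v = []" using R by blast
  show "r \<notin> set (ch v)" using R by blast
  show "u \<in> V \<Longrightarrow> (r, u) \<in> (tree_edges ch)\<^sup>*" using R by blast
  show "u \<in> V - {r} \<Longrightarrow> \<exists>!v. u \<in> set (ch v)" using R by blast
qed

lemma rt_parent_in: "u \<in> set (ch v) \<Longrightarrow> v \<in> V"
proof (rule ccontr)
  assume "u \<in> set (ch v)" "v \<notin> V"
  then show False using rt_basic(5)[of v] by simp
qed

lemma rt_uniq: "u \<in> set (ch v) \<Longrightarrow> u \<in> set (ch w) \<Longrightarrow> v = w"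
proof -
  assume a: "u \<in> set (ch v)" "u \<in> set (ch w)"
  then have "u \<in> V - {r}" using rt_basic(4,6) by blast
  then have "\<exists>!v. u \<in> set (ch v)" by (rule rt_basic(8))
  then show ?thesis using a by blast
qed

lemma rt_tparent: assumes u: "u \<in> set (ch v)" shows "tparent ch u = v"
  unfolding tparent_def
proof (rule the_equality)
  show "u \<in> set (ch v)" by (rule u)
  fix w assume "u \<in> set (ch w)" then show "w = v" using rt_uniq u by blast
qed

lemma vapp_eq: assumes u: "u \<in> set (ch p)" shows "vapp ch u = appended (ch p) u"
proof -
  have "\<exists>q. u \<in> set (ch q)" using u by blast
  then show ?thesis unfolding vapp_def using rt_tparent[OF u] by simp
qed

lemma vapp_none: "(\<And>p. u \<notin> set (ch p)) \<Longrightarrow> vapp ch u = []"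
  unfolding vapp_def by simp

lemma vapp_par: assumes u: "u \<in> set (vapp ch v)" shows "\<exists>p. v \<in> set (ch p)"
proof (rule ccontr)
  assume "\<not> (\<exists>p. v \<in> set (ch p))"
  then have "vapp ch v = []" unfolding vapp_def by simp
  then show False using u by simp
qed

lemma app_in: assumes "b \<in> set (appended L a)" shows "a \<in> set L"
proof (rule ccontr)
  assume "a \<notin> set L"
  then have "appended L a = []" by (rule app_notin)
  then show False using assms by simp
qed

lemma vch_parent:
  assumes uv: "u \<in> set (vchildren ch v)"
  shows "\<exists>p. u \<in> set (ch p) \<and> ((v = p \<and> u \<in> set (kept (ch p))) \<or>
            (v \<in> set (ch p) \<and> u \<in> set (appended (ch p) v)))"
proof (cases "u \<in> set (kept (ch v))")
  case True
  moreover have "u \<in> set (ch v)" using kept_set[of "ch v"] True by (rule subsetD)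
  ultimately show ?thesis by (intro exI[of _ v]) simp
next
  case False
  then have u: "u \<in> set (vapp ch v)" using uv unfolding vchildren_def vcur_def by simp
  have "\<exists>p. v \<in> set (ch p)"
  proof (rule ccontr)
    assume "\<not> (\<exists>p. v \<in> set (ch p))"
    then have "vapp ch v = []" unfolding vapp_def by simp
    then show False using u by simp
  qed
  then obtain p where p: "v \<in> set (ch p)" by blast
  have ua: "u \<in> set (appended (ch p) v)" using u unfolding vapp_eq[OF p] .
  have "u \<in> set (ch p)" using app_set[of "ch p" v] ua by (rule subsetD)
  then show ?thesis using p ua by (intro exI[of _ p]) simp
qed

lemma vch_unique:
  assumes u1: "u \<in> set (vchildren ch v1)" and u2: "u \<in> set (vchildren ch v2)"
  shows "v1 = v2"
proof -
  obtain p1 where p1: "u \<in> set (ch p1)" "(v1 = p1 \<and> u \<in> set (kept (ch p1))) \<or>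
            (v1 \<in> set (ch p1) \<and> u \<in> set (appended (ch p1) v1))" using vch_parent[OF u1] by blast
  obtain p2 where p2: "u \<in> set (ch p2)" "(v2 = p2 \<and> u \<in> set (kept (ch p2))) \<or>
            (v2 \<in> set (ch p2) \<and> u \<in> set (appended (ch p2) v2))" using vch_parent[OF u2] by blast
  have "p1 = p2" using p1(1) p2(1) rt_uniq by blast
  then show ?thesis using p1(2) p2(2) kept_app_disj[OF rt_basic(3)] app_unique[OF rt_basic(3)]
    by blast
qed

lemma vch_set: "set (vchildren ch v) \<subseteq> V"
  using vch_parent rt_basic(4) by blast

lemma vch_distinct: "distinct (vchildren ch v)"
proof -
  have d1: "distinct (vcur ch v)" unfolding vcur_def by (rule kept_distinct[OF rt_basic(3)])
  have d2: "distinct (vapp ch v)"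
  proof (cases "\<exists>p. v \<in> set (ch p)")
    case True
    then obtain p where p: "v \<in> set (ch p)" by blast
    then show ?thesis using vapp_eq[OF p] app_distinct_len[OF rt_basic(3)[of p]] by simp
  next
    case False
    then have "vapp ch v = []" by (intro vapp_none) blast
    then show ?thesis by simp
  qed
  have "set (vcur ch v) \<inter> set (vapp ch v) = {}"
  proof (rule ccontr)
    assume "set (vcur ch v) \<inter> set (vapp ch v) \<noteq> {}"
    then obtain u where u: "u \<in> set (kept (ch v))" "u \<in> set (vapp ch v)" unfolding vcur_def by blast
    then obtain p where p: "v \<in> set (ch p)" using vapp_par by blast
    then have ua: "u \<in> set (appended (ch p) v)" using u vapp_eq[OF p] by simp
    have "u \<in> set (ch p)" using app_set[of "ch p" v] ua by (rule subsetD)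
    moreover have "u \<in> set (ch v)" using kept_set[of "ch v"] u(1) by (rule subsetD)
    ultimately have "p = v" by (rule rt_uniq)
    then have "u \<in> set (appended (ch v) v)" using ua by simp
    then show False using kept_app_disj[OF rt_basic(3)[of v] u(1)] by simp
  qed
  then show ?thesis unfolding vchildren_def using d1 d2 by simp
qed

lemma vch_len: "length (vchildren ch v) \<le> 4"
proof -
  have "length (vapp ch v) \<le> 2"
  proof (cases "\<exists>p. v \<in> set (ch p)")
    case True
    then obtain p where p: "v \<in> set (ch p)" by blast
    then show ?thesis using vapp_eq[OF p] app_distinct_len[OF rt_basic(3)[of p]] by simp
  next
    case False
    then have "vapp ch v = []" by (intro vapp_none) blast
    then show ?thesis by simp
  qed
  then show ?thesis unfolding vchildren_def vcur_def using kept_len[of "ch v"] by simp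
qed

lemma vch_reach: "(r, u) \<in> (tree_edges ch)\<^sup>* \<Longrightarrow> (r, u) \<in> (tree_edges (vchildren ch))\<^sup>*"
proof (induction rule: rtrancl_induct)
  case base then show ?case by simp
next
  case (step v u)
  then have u: "u \<in> set (ch v)" unfolding tree_edges_def by simp
  let ?R = "{(a, b). b \<in> set (appended (ch v) a)}"
  obtain z where z: "z \<in> set (kept (ch v))" "(z, u) \<in> ?R\<^sup>*"
    using app_reach[OF rt_basic(3) u] by blast
  have sub: "?R \<subseteq> tree_edges (vchildren ch)"
  proof
    fix x assume "x \<in> ?R"
    then obtain a b where x: "x = (a, b)" and ab: "b \<in> set (appended (ch v) a)" by blast
    from ab have "a \<in> set (ch v)" by (rule app_in)
    then have "vapp ch a = appended (ch v) a" by (rule vapp_eq)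
    then show "x \<in> tree_edges (vchildren ch)" using ab unfolding x tree_edges_def vchildren_def by simp
  qed
  have zu: "(z, u) \<in> (tree_edges (vchildren ch))\<^sup>*" using rtrancl_mono[OF sub] z(2) by (rule subsetD)
  have vz: "(v, z) \<in> tree_edges (vchildren ch)" using z(1) unfolding tree_edges_def vchildren_def vcur_def by simp
  have "(r, z) \<in> (tree_edges (vchildren ch))\<^sup>*" by (rule rtrancl_into_rtrancl[OF step.IH vz])
  then show ?case using zu by (rule rtrancl_trans)
qed

lemma virtual_rooted: "rooted_tree V r (vchildren ch)"
  unfolding rooted_tree_def
proof (intro conjI allI ballI impI)
  show "finite V" "r \<in> V" using rt_basic(1,2) by -
  fix v
  show "distinct (vchildren ch v)" by (rule vch_distinct)
  show "set (vchildren ch v) \<subseteq> V" by (rule vch_set)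
  show "r \<notin> set (vchildren ch v)" using vch_set vch_parent rt_basic(6) by blast
next
  fix v assume "v \<notin> V"
  then have "ch v = []" "\<And>p. v \<notin> set (ch p)" using rt_basic(4,5) by blast+
  then show "vchildren ch v = []" unfolding vchildren_def vcur_def kept_def using vapp_none by simp
next
  fix u assume u: "u \<in> V - {r}"
  then obtain p where p: "u \<in> set (ch p)" using rt_basic(8) by blast
  obtain z where z: "z \<in> set (kept (ch p))" "(z, u) \<in> {(a, b). b \<in> set (appended (ch p) a)}\<^sup>*"
    using app_reach[OF rt_basic(3) p] by blast
  have "\<exists>v. u \<in> set (vchildren ch v)"
  proof (cases "z = u")
    case True then show ?thesis using z(1) unfolding vchildren_def vcur_def by (intro exI[of _ p]) simp
  next
    case False
    then obtain a where "(a, u) \<in> {(a, b). b \<in> set (appended (ch p) a)}"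
      using z(2) False by (blast elim: rtranclE)
    then have a: "u \<in> set (appended (ch p) a)" by simp
    then have "a \<in> set (ch p)" by (rule app_in)
    then have "vapp ch a = appended (ch p) a" by (rule vapp_eq)
    then show ?thesis using a unfolding vchildren_def by (intro exI[of _ a]) simp
  qed
  then show "\<exists>!v. u \<in> set (vchildren ch v)" using vch_unique by blast
next
  fix u assume "u \<in> V"
  then show "(r, u) \<in> (tree_edges (vchildren ch))\<^sup>*" using rt_basic(7) vch_reach by blast
qed

lemma chain_cap:
  "apath (vapp ch) x k w \<Longrightarrow> 1 \<le> k \<Longrightarrow>
    \<exists>p. x \<in> set (ch p) \<and> w \<in> set (ch p) \<and> 2 ^ k * (cap (ch p) w + 1) \<le> cap (ch p) x + 1"
proof (induction rule: apath.induct)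
  case refl then show ?case by simp
next
  case (step u k w w')
  from step.hyps(2) obtain q where q: "w \<in> set (ch q)" using vapp_par by blast
  then have w': "w' \<in> set (appended (ch q) w)" using step.hyps(2) vapp_eq[OF q] by simp
  then have w'q: "w' \<in> set (ch q)" using app_set[of "ch q" w] by blast
  have dec: "2 * cap (ch q) w' + 1 \<le> cap (ch q) w" using cap_dec[OF rt_basic(3) w'] .
  show ?case
  proof (cases "k = 0")
    case True
    then have "apath (vapp ch) u 0 w" using step.hyps(1) by simp
    then have "u = w" by (cases rule: apath.cases) auto
    then show ?thesis using q w'q dec True by (intro exI[of _ q]) simp
  next
    case False
    then have k1: "1 \<le> k" by simp
    obtain p where p: "u \<in> set (ch p)" "w \<in> set (ch p)" "2 ^ k * (cap (ch p) w + 1) \<le> cap (ch p) u + 1"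
      using step.IH[OF k1] by blast
    have "p = q" using p(2) q rt_uniq by blast
    have "2 ^ Suc k * (cap (ch p) w' + 1) = 2 ^ k * (2 * cap (ch p) w' + 2)" by simp
    also have "\<dots> \<le> 2 ^ k * (cap (ch p) w + 1)"
    proof (rule mult_le_mono2)
      show "2 * cap (ch p) w' + 2 \<le> cap (ch p) w + 1" using dec \<open>p = q\<close> by simp
    qed
    also have "\<dots> \<le> cap (ch p) u + 1" using p(3) .
    finally have "2 ^ Suc k * (cap (ch p) w' + 1) \<le> cap (ch p) u + 1" .
    moreover have "w' \<in> set (ch p)" using w'q \<open>p = q\<close> by simp
    ultimately show ?thesis using p(1) by blast
  qed
qed

lemma chain_bound: assumes a: "apath (vapp ch) x k w" shows "2 ^ k \<le> card V + 1"
proof (cases "k = 0")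
  case False
  then have k: "1 \<le> k" by simp
  obtain p where p: "x \<in> set (ch p)" "2 ^ k * (cap (ch p) w + 1) \<le> cap (ch p) x + 1"
    using chain_cap[OF a k] by blast
  have "cap (ch p) x \<le> length (ch p)" by (rule cap_le)
  also have "\<dots> = card (set (ch p))" using distinct_card[OF rt_basic(3)] by simp
  also have "\<dots> \<le> card V" using card_mono[OF rt_basic(1) rt_basic(4)] .
  finally have "cap (ch p) x \<le> card V" .
  moreover have "2 ^ k \<le> 2 ^ k * (cap (ch p) w + 1)" by simp
  ultimately show ?thesis using p(2) by linarith
qed simp

end



lemma bcast_edge: "bcast_msg C A t v u \<Longrightarrow> u \<in> set (C v) \<or> u \<in> set (A v)"
  by (induction rule: bcast_msg.induct) auto

lemma bcast_chain: "bcast_msg C A t v u \<Longrightarrow> 1 \<le> t \<and> (\<exists>x. apath A x (t - 1) u)"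
proof (induction rule: bcast_msg.induct)
  case (cur u v)
  then show ?case using apath.refl[of A u] by auto
next
  case (app t w v u)
  then obtain x where x: "apath A x (t - 1) v" and t: "1 \<le> t" by blast
  have "apath A x (Suc (t - 1)) u" using apath.step[OF x app.hyps(2)] .
  then show ?case using t by auto
qed

lemma manhattan_sym: "manhattan a b = manhattan b a"
  unfolding manhattan_def by (simp add: abs_minus_commute)

lemma sum_inj_le:
  fixes f :: "'a \<Rightarrow> nat" and h :: "'b \<Rightarrow> nat"
  assumes inj: "inj_on g M" and sub: "g ` M \<subseteq> E" and fin: "finite E" and fh: "\<And>x. x \<in> M \<Longrightarrow> f x = h (g x)"
  shows "sum f M \<le> sum h E"
proof -
  have "sum f M = sum (h \<circ> g) M" using fh by (intro sum.cong) auto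
  also have "\<dots> = sum h (g ` M)" using sum.reindex[OF inj, of h] by simp
  also have "\<dots> \<le> sum h E" by (rule sum_mono2[OF fin sub]) simp
  finally show ?thesis .
qed

lemma depth_bound:
  fixes M :: "(nat \<times> nat \<times> nat) set"
  assumes b: "\<And>x. x \<in> M \<Longrightarrow> 2 ^ (fst x - 1) \<le> N + 1" and N: "1 \<le> N"
  shows "real (msg_depth M) \<le> 2 * (1 + log 2 (real N))"
proof -
  let ?S = "fst ` M"
  have lg: "0 \<le> log 2 (real N)" using N by simp
  have Sb: "?S \<subseteq> {..N + 1}"
  proof
    fix t assume "t \<in> ?S"
    then have "2 ^ (t - 1) \<le> N + 1" using b by auto
    moreover have "t - 1 < 2 ^ (t - 1)" by (rule less_exp)
    ultimately have "t - 1 < N + 1" by linarith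
    then show "t \<in> {..N + 1}" by simp
  qed
  show ?thesis
  proof (cases "?S = {}")
    case True
    then show ?thesis unfolding msg_depth_def using lg by simp
  next
    case False
    have fin: "finite ?S" using Sb finite_subset by blast
    have "msg_depth M = Max ?S" unfolding msg_depth_def using cSup_eq_Max[OF fin False] .
    then have "msg_depth M \<in> ?S" using Max_in[OF fin False] by simp
    then have p: "2 ^ (msg_depth M - 1) \<le> N + 1" using b by auto
    have "2 ^ (msg_depth M - 1) \<le> 2 * N" using p N by simp
    then have "real (msg_depth M - 1) \<le> log 2 (real (2 * N))" by (rule le_log2_of_power)
    also have "\<dots> = 1 + log 2 (real N)" using N by (simp add: log_mult_pos)
    finally have "real (msg_depth M - 1) \<le> 1 + log 2 (real N)" .
    then have "real (msg_depth M) \<le> 2 + log 2 (real N)" by linarith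
    also have "2 + log 2 (real N) \<le> 2 * (1 + log 2 (real N))" using lg by simp
    finally show ?thesis .
  qed
qed

lemma card_pos: assumes rt: "rooted_tree V r ch" shows "1 \<le> card V"
proof -
  have "V \<noteq> {}" using rt_basic(2)[OF rt] by blast
  then have "0 < card V" using rt_basic(1)[OF rt] by (simp add: card_gt_0_iff)
  then show ?thesis by simp
qed

context
  fixes V r ch
  assumes rt: "rooted_tree V r ch"
begin

lemma vrt: "rooted_tree V r (vchildren ch)" by (rule virtual_rooted[OF rt])

lemma bcast_unique:
  "bcast_msg (vcur ch) (vapp ch) t v u \<Longrightarrow> bcast_msg (vcur ch) (vapp ch) t' v u \<Longrightarrow> t = t'"
proof (induction arbitrary: t' rule: bcast_msg.induct)
  case (cur u v)
  have dis: "set (vcur ch v) \<inter> set (vapp ch v) = {}"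
    using vch_distinct[OF rt, of v] unfolding vchildren_def by simp
  from cur.prems show ?case
  proof (cases rule: bcast_msg.cases)
    case (app t w)
    then show ?thesis using dis cur.hyps by blast
  qed simp
next
  case (app t w v u)
  have dis: "set (vcur ch v) \<inter> set (vapp ch v) = {}"
    using vch_distinct[OF rt, of v] unfolding vchildren_def by simp
  from app.prems show ?case
  proof (cases rule: bcast_msg.cases)
    case cur
    then show ?thesis using dis app.hyps(2) by blast
  next
    case (app s w')
    have "v \<in> set (vchildren ch w)" using bcast_edge[OF \<open>bcast_msg (vcur ch) (vapp ch) t w v\<close>]
      unfolding vchildren_def by auto
    moreover have "v \<in> set (vchildren ch w')" using bcast_edge[OF app(2)]
      unfolding vchildren_def by auto
    ultimately have "w = w'" by (rule vch_unique[OF rt])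
    then have "t = s" using "app.IH" app(2) by simp
    then show ?thesis using app(1) by simp
  qed
qed

abbreviation "EV \<equiv> Sigma V (\<lambda>v. set (vchildren ch v))"

lemma EV_fin: "finite EV"
  using rt_basic(1)[OF rt] by simp

lemma tree_energy_EV: "tree_energy K V (vchildren ch) p = (\<Sum>(v, u)\<in>EV. manhattan (K (p v)) (K (p u)))"
  unfolding tree_energy_def using rt_basic(1)[OF rt] by (subst sum.Sigma) auto

lemma edge_in_EV: "u \<in> set (vchildren ch v) \<Longrightarrow> (v, u) \<in> EV"
proof -
  assume u: "u \<in> set (vchildren ch v)"
  have "v \<in> V"
  proof (rule ccontr)
    assume "v \<notin> V"
    then have "vchildren ch v = []" by (rule rt_basic(5)[OF vrt])
    then show False using u by simp
  qed
  then show ?thesis using u by simp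
qed

lemma bcast_energy:
  "msg_energy K p (bcast_msgs (vcur ch) (vapp ch)) \<le> tree_energy K V (vchildren ch) p"
  unfolding tree_energy_EV msg_energy_def
proof (rule sum_inj_le[where g = "\<lambda>(t, v, u). (v, u)"])
  show "inj_on (\<lambda>(t, v, u). (v, u)) (bcast_msgs (vcur ch) (vapp ch))"
    unfolding inj_on_def bcast_msgs_def using bcast_unique by auto
  show "(\<lambda>(t, v, u). (v, u)) ` bcast_msgs (vcur ch) (vapp ch) \<subseteq> EV"
  proof
    fix y assume "y \<in> (\<lambda>(t, v, u). (v, u)) ` bcast_msgs (vcur ch) (vapp ch)"
    then obtain t v u where y: "y = (v, u)" and m: "bcast_msg (vcur ch) (vapp ch) t v u"
      unfolding bcast_msgs_def by auto
    have "u \<in> set (vchildren ch v)" using bcast_edge[OF m] unfolding vchildren_def by auto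
    then show "y \<in> EV" unfolding y by (rule edge_in_EV)
  qed
  show "finite EV" by (rule EV_fin)
qed auto

lemma reduce_energy:
  "msg_energy K p (reduce_msgs (vcur ch) (vapp ch)) \<le> tree_energy K V (vchildren ch) p"
  unfolding tree_energy_EV msg_energy_def
proof (rule sum_inj_le[where g = "\<lambda>(t, u, v). (v, u)"])
  show "inj_on (\<lambda>(t, u, v). (v, u)) (reduce_msgs (vcur ch) (vapp ch))"
    unfolding inj_on_def reduce_msgs_def by auto
  show "(\<lambda>(t, u, v). (v, u)) ` reduce_msgs (vcur ch) (vapp ch) \<subseteq> EV"
  proof
    fix y assume "y \<in> (\<lambda>(t, u, v). (v, u)) ` reduce_msgs (vcur ch) (vapp ch)"
    then obtain u v where y: "y = (v, u)" and m: "u \<in> set (vcur ch v) \<or> u \<in> set (vapp ch v)"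
      unfolding reduce_msgs_def by auto
    have "u \<in> set (vchildren ch v)" using m unfolding vchildren_def by auto
    then show "y \<in> EV" unfolding y by (rule edge_in_EV)
  qed
  show "finite EV" by (rule EV_fin)
qed (auto simp: manhattan_sym)

lemma aheight_bound: "2 ^ aheight (vapp ch) u \<le> card V + 1"
proof -
  let ?S = "{k. \<exists>w. apath (vapp ch) u k w}"
  have ne: "?S \<noteq> {}" using apath.refl[of "vapp ch" u] by blast
  have Sb: "?S \<subseteq> {..card V + 1}"
  proof
    fix k assume "k \<in> ?S"
    then obtain w where "apath (vapp ch) u k w" by blast
    then have "2 ^ k \<le> card V + 1" by (rule chain_bound[OF rt])
    moreover have "k < 2 ^ k" by (rule less_exp)
    ultimately have "k < card V + 1" by linarith
    then show "k \<in> {..card V + 1}" by simp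
  qed
  have fin: "finite ?S" using Sb finite_subset by blast
  have "aheight (vapp ch) u = Max ?S" unfolding aheight_def using cSup_eq_Max[OF fin ne] .
  then have "aheight (vapp ch) u \<in> ?S" using Max_in[OF fin ne] by simp
  then obtain w where "apath (vapp ch) u (aheight (vapp ch) u) w" by blast
  then show ?thesis by (rule chain_bound[OF rt])
qed

lemma bcast_depth: "real (msg_depth (bcast_msgs (vcur ch) (vapp ch))) \<le> 2 * (1 + log 2 (real (card V)))"
proof (rule depth_bound)
  show "1 \<le> card V" by (rule card_pos[OF rt])
  fix x assume "x \<in> bcast_msgs (vcur ch) (vapp ch)"
  then obtain t v u where x: "x = (t, v, u)" and m: "bcast_msg (vcur ch) (vapp ch) t v u"
    unfolding bcast_msgs_def by auto
  obtain y where "apath (vapp ch) y (t - 1) u" using bcast_chain[OF m] by blast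
  then show "2 ^ (fst x - 1) \<le> card V + 1" unfolding x using chain_bound[OF rt] by simp
qed

lemma reduce_depth: "real (msg_depth (reduce_msgs (vcur ch) (vapp ch))) \<le> 2 * (1 + log 2 (real (card V)))"
proof (rule depth_bound)
  show "1 \<le> card V" by (rule card_pos[OF rt])
  fix x assume "x \<in> reduce_msgs (vcur ch) (vapp ch)"
  then obtain u v where x: "x = (Suc (aheight (vapp ch) u), u, v)"
    unfolding reduce_msgs_def by auto
  show "2 ^ (fst x - 1) \<le> card V + 1" unfolding x using aheight_bound by simp
qed

end

theorem mainTheorem6:
  fixes K :: "nat \<Rightarrow> nat \<times> nat"
  assumes "bij K"
    and "energy_bound K"
  shows "\<exists>c::real. \<forall>V r ch p.
           rooted_tree V r ch \<and> light_first V (vchildren ch) p \<longrightarrow>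
             real (msg_energy K p (bcast_msgs (vcur ch) (vapp ch))) \<le> c * real (card V) \<and>
             real (msg_depth (bcast_msgs (vcur ch) (vapp ch))) \<le> c * (1 + log 2 (real (card V))) \<and>
             real (msg_energy K p (reduce_msgs (vcur ch) (vapp ch))) \<le> c * real (card V) \<and>
             real (msg_depth (reduce_msgs (vcur ch) (vapp ch))) \<le> c * (1 + log 2 (real (card V)))"
proof -
  obtain c0 :: real where c0: "\<And>V r ch p. rooted_tree V r ch \<and> (\<forall>v. length (ch v) \<le> 4) \<and> light_first V ch p \<Longrightarrow>
        real (tree_energy K V ch p) \<le> c0 * real (card V)"
    using assms(2) unfolding energy_bound_def by blast
  define c where "c = max c0 2"
  show ?thesis
  proof (intro exI[of _ c] allI impI)
    fix V r ch p
    assume H: "rooted_tree V r ch \<and> light_first V (vchildren ch) p"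
    then have rt: "rooted_tree V r ch" and lf: "light_first V (vchildren ch) p" by auto
    have te: "real (tree_energy K V (vchildren ch) p) \<le> c0 * real (card V)"
      using c0[of V r "vchildren ch" p] virtual_rooted[OF rt] vch_len[OF rt] lf by blast
    also have "\<dots> \<le> c * real (card V)" unfolding c_def by (intro mult_right_mono) auto
    finally have te': "real (tree_energy K V (vchildren ch) p) \<le> c * real (card V)" .
    have N: "1 \<le> card V" by (rule card_pos[OF rt])
    have lg: "0 \<le> 1 + log 2 (real (card V))" using N by simp
    have c2: "2 * (1 + log 2 (real (card V))) \<le> c * (1 + log 2 (real (card V)))"
      unfolding c_def by (intro mult_right_mono lg) auto
    show "real (msg_energy K p (bcast_msgs (vcur ch) (vapp ch))) \<le> c * real (card V) \<and>
             real (msg_depth (bcast_msgs (vcur ch) (vapp ch))) \<le> c * (1 + log 2 (real (card V))) \<and>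
             real (msg_energy K p (reduce_msgs (vcur ch) (vapp ch))) \<le> c * real (card V) \<and>
             real (msg_depth (reduce_msgs (vcur ch) (vapp ch))) \<le> c * (1 + log 2 (real (card V)))"
    proof (intro conjI)
      show "real (msg_energy K p (bcast_msgs (vcur ch) (vapp ch))) \<le> c * real (card V)"
        using bcast_energy[OF rt, of K p] te' by linarith
      show "real (msg_energy K p (reduce_msgs (vcur ch) (vapp ch))) \<le> c * real (card V)"
        using reduce_energy[OF rt, of K p] te' by linarith
      show "real (msg_depth (bcast_msgs (vcur ch) (vapp ch))) \<le> c * (1 + log 2 (real (card V)))"
        using bcast_depth[OF rt] c2 by linarith
      show "real (msg_depth (reduce_msgs (vcur ch) (vapp ch))) \<le> c * (1 + log 2 (real (card V)))"
        using reduce_depth[OF rt] c2 by linarith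
    qed
  qed
qed

end
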